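(* Let $n$ be an even positive integer and let $\mathbb{F}$ be a field with $\operatorname{char}(\mathbb{F})\neq 2$ and $|\mathbb{F}|\geq n^2+1$. Let $Q_n$ denote the set of all $n\times n$ skew-symmetric matrices over $\mathbb{F}$. Let $\psi:Q_n\to Q_n$ be a map, and let $\chi$ be a map from the set of all invertible matrices in $Q_n$ into $Q_n$. If $\operatorname{tr}(xy)=\operatorname{tr}(\chi(x)\psi(y))$ for every invertible $x\in Q_n$ and every $y\in Q_n$, then $\psi$ is linear.
   Context: A matrix $x$ is skew-symmetric if $x^t=-x$. *)

theory Defs
  imports "Jordan_Normal_Form.Matrix"
begin

definition skew_mats :: "nat \<Rightarrow> 'a::field mat set" where
  "skew_mats n = {x \<in> carrier_mat n n. transpose_mat x = - x}"

definition mat_trace :: "'a::comm_ring_1 mat \<Rightarrow> 'a" where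
  "mat_trace A = (\<Sum>i<dim_row A. A $$ (i, i))"

definition linear_on_skew :: "nat \<Rightarrow> ('a::field mat \<Rightarrow> 'a mat) \<Rightarrow> bool" where
  "linear_on_skew n f \<longleftrightarrow>
     (\<forall>x\<in>skew_mats n. \<forall>y\<in>skew_mats n. \<forall>a b.
        f (a \<cdot>\<^sub>m x + b \<cdot>\<^sub>m y) = a \<cdot>\<^sub>m f x + b \<cdot>\<^sub>m f y)"

end

theory Submission
  imports Defs "Jordan_Normal_Form.Determinant"
begin

lemma key_inj:
  fixes W Bf :: "'b \<Rightarrow> 'b \<Rightarrow> 'a::field" and c :: "'b \<Rightarrow> 'a"
  assumes fin: "finite P"
    and AB: "\<forall>p\<in>P. \<forall>p'\<in>P. (\<Sum>q\<in>P. W p q * Bf q p') = (if p = p' then 1 else 0)"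
    and Wc: "\<forall>p\<in>P. (\<Sum>q\<in>P. W p q * c q) = 0"
  shows "\<forall>q\<in>P. c q = 0"
proof -
  obtain h where h: "bij_betw h {0..<card P} P" using ex_bij_betw_nat_finite[OF fin] by blast
  define m where "m = card P"
  have h': "bij_betw h {..<m} P" using h unfolding m_def by (simp add: atLeast0LessThan)
  have hP: "\<And>k. k < m \<Longrightarrow> h k \<in> P" using h' by (auto simp: bij_betw_def)
  have reidx: "\<And>g. (\<Sum>l<m. g (h l)) = (\<Sum>q\<in>P. g q)"
    using sum.reindex_bij_betw[OF h'] by blast
  define A where "A = mat m m (\<lambda>(k,l). W (h k) (h l))"
  define B where "B = mat m m (\<lambda>(l,k). Bf (h l) (h k))"
  have A: "A \<in> carrier_mat m m" and B: "B \<in> carrier_mat m m" by (auto simp: A_def B_def)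
  have "A * B = 1\<^sub>m m"
  proof (rule eq_matI)
    fix i j assume ij: "i < dim_row (1\<^sub>m m)" "j < dim_col (1\<^sub>m m)"
    then have "(A * B) $$ (i,j) = (\<Sum>l<m. W (h i) (h l) * Bf (h l) (h j))"
      by (simp add: A_def B_def scalar_prod_def atLeast0LessThan)
    also have "\<dots> = (\<Sum>q\<in>P. W (h i) q * Bf q (h j))" by (rule reidx)
    also have "\<dots> = (if h i = h j then 1 else 0)" using AB hP ij by simp
    also have "\<dots> = 1\<^sub>m m $$ (i,j)" using ij h' by (auto simp: bij_betw_def inj_on_def)
    finally show "(A * B) $$ (i,j) = 1\<^sub>m m $$ (i,j)" .
  qed (auto simp: A_def B_def)
  then have BA: "B * A = 1\<^sub>m m" using mat_mult_left_right_inverse[OF A B] by blast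
  define v where "v = vec m (\<lambda>l. c (h l))"
  have v: "v \<in> carrier_vec m" by (simp add: v_def)
  have Av: "A *\<^sub>v v = 0\<^sub>v m"
  proof (rule eq_vecI)
    fix i assume i: "i < dim_vec (0\<^sub>v m)"
    then have "(A *\<^sub>v v) $ i = (\<Sum>l<m. W (h i) (h l) * c (h l))"
      by (simp add: A_def v_def scalar_prod_def atLeast0LessThan)
    also have "\<dots> = 0" using reidx[of "\<lambda>q. W (h i) q * c q"] Wc hP i by simp
    finally show "(A *\<^sub>v v) $ i = 0\<^sub>v m $ i" using i by simp
  qed (simp add: A_def)
  have "v = (B * A) *\<^sub>v v" using BA v by simp
  also have "\<dots> = B *\<^sub>v (A *\<^sub>v v)" using A B v by simp
  also have "\<dots> = 0\<^sub>v m" using Av B by auto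
  finally have v0: "v = 0\<^sub>v m" .
  show ?thesis
  proof
    fix q assume q: "q \<in> P"
    then obtain l where l: "l < m" "q = h l" using h' by (auto simp: bij_betw_def)
    have "v $ l = 0" using v0 l by simp
    then show "c q = 0" using l by (simp add: v_def)
  qed
qed

definition PP :: "nat \<Rightarrow> (nat \<times> nat) set" where "PP n = {(a,b). a < b \<and> b < n}"

definition sform :: "nat \<Rightarrow> 'a::field mat \<Rightarrow> 'a mat \<Rightarrow> 'a" where
  "sform n w v = (\<Sum>p\<in>PP n. w $$ p * v $$ p)"

lemma PP_finite: "finite (PP n)"
  by (rule finite_subset[of _ "{..<n} \<times> {..<n}"]) (auto simp: PP_def)

lemma PP_Suc: "PP (Suc n) = PP n \<union> (\<lambda>a. (a,n)) ` {..<n}"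
  by (auto simp: PP_def less_Suc_eq)

lemma sum_sq_sym:
  fixes f :: "nat \<times> nat \<Rightarrow> 'a::comm_ring_1"
  assumes "\<And>a b. a < n \<Longrightarrow> b < n \<Longrightarrow> f (a,b) = f (b,a)" "\<And>a. a < n \<Longrightarrow> f (a,a) = 0"
  shows "(\<Sum>a<n. \<Sum>b<n. f (a,b)) = 2 * (\<Sum>p\<in>PP n. f p)"
  using assms
proof (induction n)
  case 0 then show ?case by (simp add: PP_def)
next
  case (Suc n)
  have IH: "(\<Sum>a<n. \<Sum>b<n. f (a,b)) = 2 * (\<Sum>p\<in>PP n. f p)" using Suc by simp
  have d: "PP n \<inter> (\<lambda>a. (a,n)) ` {..<n} = {}" by (auto simp: PP_def)
  have s2: "(\<Sum>p\<in>PP (Suc n). f p) = (\<Sum>p\<in>PP n. f p) + (\<Sum>a<n. f (a,n))"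
    unfolding PP_Suc by (subst sum.union_disjoint) (auto simp: PP_finite d sum.reindex inj_on_def)
  have sy: "(\<Sum>b<n. f (n,b)) = (\<Sum>a<n. f (a,n))" using Suc.prems(1) by (intro sum.cong) auto
  have "(\<Sum>a<Suc n. \<Sum>b<Suc n. f (a,b)) = (\<Sum>a<n. \<Sum>b<n. f (a,b)) + (\<Sum>a<n. f (a,n)) + (\<Sum>b<n. f (n,b)) + f (n,n)"
    by (simp add: sum.distrib)
  also have "\<dots> = 2 * (\<Sum>p\<in>PP (Suc n). f p)" using IH sy s2 Suc.prems(2)[of n] by (simp add: algebra_simps)
  finally show ?case .
qed

lemma skew_carrier: "x \<in> skew_mats n \<Longrightarrow> x \<in> carrier_mat n n"
  by (simp add: skew_mats_def)

lemma skew_entry: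
  assumes "x \<in> skew_mats n" "a < n" "b < n"
  shows "x $$ (b,a) = - x $$ (a,b)"
proof -
  have c: "x \<in> carrier_mat n n" and t: "transpose_mat x = - x" using assms(1) by (auto simp: skew_mats_def)
  have "transpose_mat x $$ (a,b) = (- x) $$ (a,b)" using t by simp
  then show ?thesis using c assms by simp
qed

lemma skew_diag:
  assumes "x \<in> skew_mats n" "a < n" "(2::'a::field) \<noteq> 0"
  shows "x $$ (a,a) = (0::'a)"
proof -
  have "x $$ (a,a) = - x $$ (a,a)" using skew_entry[OF assms(1,2,2)] .
  then have "2 * x $$ (a,a) = 0" by (simp add: algebra_simps)
  then show ?thesis using assms(3) by simp
qed

lemma trace_sform:
  assumes "w \<in> skew_mats n" "v \<in> skew_mats n" "(2::'a::field) \<noteq> 0"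
  shows "mat_trace (w * v) = - 2 * sform n w (v::'a mat)"
proof -
  have c: "w \<in> carrier_mat n n" "v \<in> carrier_mat n n" using assms by (auto simp: skew_mats_def)
  have "mat_trace (w * v) = (\<Sum>a<n. \<Sum>b<n. w $$ (a,b) * v $$ (b,a))"
    using c by (simp add: mat_trace_def scalar_prod_def atLeast0LessThan)
  also have "\<dots> = (\<Sum>a<n. \<Sum>b<n. - (w $$ (a,b) * v $$ (a,b)))"
  proof (intro sum.cong refl)
    fix a b assume "a \<in> {..<n}" "b \<in> {..<n}"
    then have "v $$ (b,a) = - v $$ (a,b)" by (intro skew_entry[OF assms(2)]) auto
    then show "w $$ (a,b) * v $$ (b,a) = - (w $$ (a,b) * v $$ (a,b))" by simp
  qed
  also have "\<dots> = - (\<Sum>a<n. \<Sum>b<n. (\<lambda>(a,b). w $$ (a,b) * v $$ (a,b)) (a,b))"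
    by (simp add: sum_negf)
  also have "\<dots> = - (2 * (\<Sum>p\<in>PP n. (\<lambda>(a,b). w $$ (a,b) * v $$ (a,b)) p))"
  proof (subst sum_sq_sym)
    fix a b assume ab: "a < n" "b < n"
    show "(\<lambda>(a,b). w $$ (a,b) * v $$ (a,b)) (a,b) = (\<lambda>(a,b). w $$ (a,b) * v $$ (a,b)) (b,a)"
      using skew_entry[OF assms(1) ab] skew_entry[OF assms(2) ab] by simp
  next
    fix a assume "a < n"
    then show "(\<lambda>(a,b). w $$ (a,b) * v $$ (a,b)) (a,a) = 0"
      using skew_diag[OF assms(1) _ assms(3)] by simp
  qed simp
  also have "\<dots> = - 2 * sform n w v" by (simp add: sform_def case_prod_beta')
  finally show ?thesis .
qed


definition smat :: "nat \<Rightarrow> (nat \<Rightarrow> nat) \<Rightarrow> (nat \<Rightarrow> 'a::field) \<Rightarrow> 'a mat" where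
  "smat n \<sigma> s = mat n n (\<lambda>(a,b). if b = \<sigma> a then s a else 0)"

lemma smat_mult:
  assumes inv: "\<forall>a<n. \<sigma> a < n \<and> \<sigma> (\<sigma> a) = a"
  shows "smat n \<sigma> s * smat n \<sigma> t = mat n n (\<lambda>(a,b). if b = a then s a * t (\<sigma> a) else 0)"
proof (rule eq_matI)
  fix i k assume ik: "i < dim_row (mat n n (\<lambda>(a,b). if b = a then s a * t (\<sigma> a) else (0::'a)))"
     "k < dim_col (mat n n (\<lambda>(a,b). if b = a then s a * t (\<sigma> a) else (0::'a)))"
  then have i: "i < n" and k: "k < n" by auto
  have "(smat n \<sigma> s * smat n \<sigma> t) $$ (i,k) = (\<Sum>b<n. (if b = \<sigma> i then s i else 0) * (if k = \<sigma> b then t b else 0))"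
    using i k by (simp add: smat_def scalar_prod_def atLeast0LessThan)
  also have "\<dots> = (\<Sum>b<n. if b = \<sigma> i then s i * (if k = \<sigma> (\<sigma> i) then t (\<sigma> i) else 0) else 0)"
    by (intro sum.cong refl) auto
  also have "\<dots> = s i * (if k = \<sigma> (\<sigma> i) then t (\<sigma> i) else 0)"
    using inv i by simp
  also have "\<dots> = (if k = i then s i * t (\<sigma> i) else 0)" using inv i by auto
  finally show "(smat n \<sigma> s * smat n \<sigma> t) $$ (i,k) = mat n n (\<lambda>(a,b). if b = a then s a * t (\<sigma> a) else 0) $$ (i,k)"
    using i k by simp
qed (auto simp: smat_def)

lemma smat_good:
  assumes h: "\<forall>a<n. \<sigma> a < n \<and> \<sigma> (\<sigma> a) = a \<and> \<sigma> a \<noteq> a \<and> s (\<sigma> a) = - s a \<and> s a * s a = (1::'a::field)"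
  shows "smat n \<sigma> s \<in> skew_mats n \<and> invertible_mat (smat n \<sigma> s)"
proof
  have inv: "\<forall>a<n. \<sigma> a < n \<and> \<sigma> (\<sigma> a) = a" using h by blast
  show "smat n \<sigma> s \<in> skew_mats n"
    unfolding skew_mats_def
  proof (intro CollectI conjI)
    show "smat n \<sigma> s \<in> carrier_mat n n" by (simp add: smat_def)
    show "transpose_mat (smat n \<sigma> s) = - smat n \<sigma> s"
    proof (rule eq_matI)
      fix i j assume "i < dim_row (- smat n \<sigma> s)" "j < dim_col (- smat n \<sigma> s)"
      then have i: "i < n" and j: "j < n" by (auto simp: smat_def)
      have e: "(i = \<sigma> j) = (j = \<sigma> i)"
      proof
        assume "i = \<sigma> j" then show "j = \<sigma> i" using h j by auto
      next
        assume "j = \<sigma> i" then show "i = \<sigma> j" using h i by auto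
      qed
      have "s j = - s i" if ij: "i = \<sigma> j"
      proof -
        have "s (\<sigma> j) = - s j" using h j by blast
        then show ?thesis using ij by simp
      qed
      then show "transpose_mat (smat n \<sigma> s) $$ (i, j) = (- smat n \<sigma> s) $$ (i, j)"
        using i j e by (auto simp: smat_def)
    qed (auto simp: smat_def)
  qed
  let ?t = "\<lambda>a. - s a"
  have m1: "smat n \<sigma> s * smat n \<sigma> ?t = 1\<^sub>m n"
    unfolding smat_mult[OF inv] by (rule eq_matI) (use h in auto)
  have m2: "smat n \<sigma> ?t * smat n \<sigma> s = 1\<^sub>m n"
    unfolding smat_mult[OF inv] by (rule eq_matI) (use h in auto)
  show "invertible_mat (smat n \<sigma> s)"
    unfolding invertible_mat_def inverts_mat_def
    using m1 m2 by (auto simp: smat_def square_mat.simps)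
qed

definition sw :: "nat \<Rightarrow> nat \<Rightarrow> nat \<Rightarrow> nat" where
  "sw a b x = (if x = a then b else if x = b then a else x)"

lemma sw_sw[simp]: "sw a b (sw a b x) = x" by (auto simp: sw_def)
lemma sw_lt: "a < n \<Longrightarrow> b < n \<Longrightarrow> x < n \<Longrightarrow> sw a b x < n" by (auto simp: sw_def)

lemma two_invertibles:
  assumes "even n" "i < j" "j < n"
  shows "\<exists>x1 x2. x1 \<in> skew_mats n \<and> invertible_mat x1 \<and> x2 \<in> skew_mats n \<and> invertible_mat (x2::'a::field mat)
     \<and> (\<forall>q\<in>PP n. x1 $$ q - x2 $$ q = (if q = (i,j) then 2 else 0))"
proof -
  define \<pi> where "\<pi> x = sw 0 i (sw 1 j x)" for x
  define \<pi>i where "\<pi>i x = sw 1 j (sw 0 i x)" for x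
  define \<sigma>0 :: "nat \<Rightarrow> nat" where "\<sigma>0 x = (if even x then x + 1 else x - 1)" for x
  define s0 :: "nat \<Rightarrow> 'a" where "s0 x = (if even x then 1 else -1)" for x
  define \<sigma> where "\<sigma> x = \<pi> (\<sigma>0 (\<pi>i x))" for x
  define s where "s x = s0 (\<pi>i x)" for x
  define s' where "s' x = (if x = i \<or> x = j then - s x else s x)" for x
  have n2: "1 < n" using assms by auto
  have pl: "x < n \<Longrightarrow> \<pi> x < n" for x using n2 assms by (simp add: \<pi>_def sw_lt)
  have pil: "x < n \<Longrightarrow> \<pi>i x < n" for x using n2 assms by (simp add: \<pi>i_def sw_lt)
  have ppi: "\<pi> (\<pi>i x) = x" for x by (simp add: \<pi>_def \<pi>i_def)
  have pip: "\<pi>i (\<pi> x) = x" for x by (simp add: \<pi>_def \<pi>i_def)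
  have s0l: "y < n \<Longrightarrow> \<sigma>0 y < n" for y using assms(1) unfolding \<sigma>0_def by presburger
  have s00: "\<sigma>0 (\<sigma>0 y) = y" for y unfolding \<sigma>0_def by presburger
  have s0n: "\<sigma>0 y \<noteq> y" for y unfolding \<sigma>0_def by presburger
  have s0s: "s0 (\<sigma>0 y) = - s0 y" for y unfolding \<sigma>0_def s0_def by auto
  have s0sq: "s0 y * s0 y = 1" for y unfolding s0_def by auto
  have pii: "\<pi>i i = 0" using assms by (auto simp: \<pi>i_def sw_def)
  have p1: "\<pi> 1 = j" using assms by (auto simp: \<pi>_def sw_def)
  have si: "\<sigma> i = j" unfolding \<sigma>_def using pii p1 by (simp add: \<sigma>0_def)
  have sj: "\<sigma> j = i" using si pip ppi s00 unfolding \<sigma>_def by metis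
  have ssi: "s i = 1" unfolding s_def s0_def using pii by simp
  have H: "\<forall>a<n. \<sigma> a < n \<and> \<sigma> (\<sigma> a) = a \<and> \<sigma> a \<noteq> a \<and> s (\<sigma> a) = - s a \<and> s a * s a = (1::'a)"
  proof (intro allI impI conjI)
    fix a assume a: "a < n"
    show "\<sigma> a < n" using a pl pil s0l by (simp add: \<sigma>_def)
    show "\<sigma> (\<sigma> a) = a" by (simp add: \<sigma>_def pip s00 ppi)
    show "\<sigma> a \<noteq> a" by (metis \<sigma>_def pip s0n)
    show "s (\<sigma> a) = - s a" by (simp add: \<sigma>_def s_def pip s0s)
    show "s a * s a = 1" by (simp add: s_def s0sq)
  qed
  have H': "\<forall>a<n. \<sigma> a < n \<and> \<sigma> (\<sigma> a) = a \<and> \<sigma> a \<noteq> a \<and> s' (\<sigma> a) = - s' a \<and> s' a * s' a = (1::'a)"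
  proof (intro allI impI conjI)
    fix a assume a: "a < n"
    show "\<sigma> a < n" "\<sigma> (\<sigma> a) = a" "\<sigma> a \<noteq> a" using H a by auto
    have ss: "\<sigma> (\<sigma> a) = a" "s (\<sigma> a) = - s a" using H a by auto
    show "s' (\<sigma> a) = - s' a"
    proof (cases "a = i \<or> a = j")
      case True then show ?thesis using si sj ss by (auto simp: s'_def)
    next
      case False
      have "\<sigma> a \<noteq> i"
      proof
        assume "\<sigma> a = i" then have "\<sigma> (\<sigma> a) = j" using si by simp
        then show False using ss False by simp
      qed
      moreover have "\<sigma> a \<noteq> j"
      proof
        assume "\<sigma> a = j" then have "\<sigma> (\<sigma> a) = i" using sj by simp
        then show False using ss False by simp
      qed
      ultimately have "\<sigma> a \<noteq> i \<and> \<sigma> a \<noteq> j" by blast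
      then show ?thesis using False ss by (auto simp: s'_def)
    qed
    show "s' a * s' a = 1" using H a by (auto simp: s'_def)
  qed
  have d: "\<forall>q\<in>PP n. smat n \<sigma> s $$ q - smat n \<sigma> s' $$ q = (if q = (i,j) then 2 else (0::'a))"
  proof
    fix q assume q: "q \<in> PP n"
    then obtain a b where ab: "q = (a,b)" "a < b" "b < n" by (auto simp: PP_def)
    have "smat n \<sigma> s $$ q - smat n \<sigma> s' $$ q = (if b = \<sigma> a then s a - s' a else 0)"
      using ab by (auto simp: smat_def)
    also have "\<dots> = (if q = (i,j) then 2 else 0)"
      using ab si sj ssi assms by (auto simp: s'_def)
    finally show "smat n \<sigma> s $$ q - smat n \<sigma> s' $$ q = (if q = (i,j) then 2 else (0::'a))" .
  qed
  show ?thesis using smat_good[OF H] smat_good[OF H'] d by blast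
qed


theorem lemma2p5:
  fixes n :: nat
    and \<psi> :: "'a::field mat \<Rightarrow> 'a mat"
    and \<chi> :: "'a mat \<Rightarrow> 'a mat"
  assumes "even n" and "n > 0"
    and "(2::'a) \<noteq> 0"
    and "infinite (UNIV :: 'a set) \<or> card (UNIV :: 'a set) \<ge> n^2 + 1"
    and "\<forall>y\<in>skew_mats n. \<psi> y \<in> skew_mats n"
    and "\<forall>x\<in>skew_mats n. invertible_mat x \<longrightarrow> \<chi> x \<in> skew_mats n"
    and "\<forall>x\<in>skew_mats n. invertible_mat x \<longrightarrow>
           (\<forall>y\<in>skew_mats n. mat_trace (x * y) = mat_trace (\<chi> x * \<psi> y))"
  shows "linear_on_skew n \<psi>"
proof -
  note two = assms(3)
  have tr: "sform n x y = sform n (\<chi> x) (\<psi> y)"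
    if x: "x \<in> skew_mats n" "invertible_mat x" and y: "y \<in> skew_mats n" for x y
  proof -
    have "- 2 * sform n x y = - 2 * sform n (\<chi> x) (\<psi> y)"
      using assms(7) x y trace_sform[OF x(1) y two] trace_sform[of "\<chi> x" n "\<psi> y"] assms(5,6) two
      by auto
    then show ?thesis using two by simp
  qed
  have ex: "\<forall>p\<in>PP n. \<exists>xx. fst xx \<in> skew_mats n \<and> invertible_mat (fst xx) \<and> snd xx \<in> skew_mats n \<and> invertible_mat (snd xx)
     \<and> (\<forall>q\<in>PP n. fst xx $$ q - snd xx $$ q = (if q = p then 2 else (0::'a)))"
  proof
    fix p assume "p \<in> PP n"
    then obtain i j where "p = (i,j)" "i < j" "j < n" by (auto simp: PP_def)
    then show "\<exists>xx. fst xx \<in> skew_mats n \<and> invertible_mat (fst xx) \<and> snd xx \<in> skew_mats n \<and> invertible_mat (snd xx)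
     \<and> (\<forall>q\<in>PP n. fst xx $$ q - snd xx $$ q = (if q = p then 2 else (0::'a)))"
      using two_invertibles[OF assms(1), of i j] by auto
  qed
  then obtain X where X: "\<forall>p\<in>PP n. fst (X p) \<in> skew_mats n \<and> invertible_mat (fst (X p)) \<and> snd (X p) \<in> skew_mats n \<and> invertible_mat (snd (X p))
     \<and> (\<forall>q\<in>PP n. fst (X p) $$ q - snd (X p) $$ q = (if q = p then 2 else (0::'a)))"
    by (metis bchoice)
  define W where "W p q = \<chi> (fst (X p)) $$ q - \<chi> (snd (X p)) $$ q" for p q
  have C1: "(\<Sum>q\<in>PP n. W p q * \<psi> y $$ q) = 2 * y $$ p" if p: "p \<in> PP n" and y: "y \<in> skew_mats n" for p y
  proof -
    have "(\<Sum>q\<in>PP n. W p q * \<psi> y $$ q) = sform n (\<chi> (fst (X p))) (\<psi> y) - sform n (\<chi> (snd (X p))) (\<psi> y)"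
      by (simp add: W_def sform_def sum_subtractf left_diff_distrib)
    also have "\<dots> = sform n (fst (X p)) y - sform n (snd (X p)) y"
      using tr X p y by auto
    also have "\<dots> = (\<Sum>q\<in>PP n. (fst (X p) $$ q - snd (X p) $$ q) * y $$ q)"
      by (simp add: sform_def sum_subtractf left_diff_distrib)
    also have "\<dots> = (\<Sum>q\<in>PP n. (if q = p then 2 * y $$ q else 0))"
      using X p by (intro sum.cong refl) auto
    also have "\<dots> = 2 * y $$ p" using p PP_finite by simp
    finally show ?thesis .
  qed
  define E :: "nat \<times> nat \<Rightarrow> 'a mat" where
    "E p = mat n n (\<lambda>(a,b). if (a,b) = p then 1 else if (b,a) = p then -1 else 0)" for p
  have Esk: "E p \<in> skew_mats n" if p: "p \<in> PP n" for p
    unfolding skew_mats_def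
  proof (intro CollectI conjI)
    show "E p \<in> carrier_mat n n" by (simp add: E_def)
    show "transpose_mat (E p) = - E p"
      by (rule eq_matI) (use p in \<open>auto simp: E_def PP_def\<close>)
  qed
  have Een: "E p $$ q = (if q = p then 1 else 0)" if "p \<in> PP n" "q \<in> PP n" for p q
    using that by (auto simp: E_def PP_def split: if_splits)
  define Bf where "Bf q p' = \<psi> (E p') $$ q / 2" for q p'
  have AB: "\<forall>p\<in>PP n. \<forall>p'\<in>PP n. (\<Sum>q\<in>PP n. W p q * Bf q p') = (if p = p' then 1 else 0)"
  proof (intro ballI)
    fix p p' assume pp: "p \<in> PP n" "p' \<in> PP n"
    have "(\<Sum>q\<in>PP n. W p q * Bf q p') = (\<Sum>q\<in>PP n. W p q * \<psi> (E p') $$ q) / 2"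
      by (simp add: Bf_def sum_divide_distrib)
    also have "\<dots> = E p' $$ p" using C1[OF pp(1) Esk[OF pp(2)]] two by simp
    also have "\<dots> = (if p = p' then 1 else 0)" using Een pp by simp
    finally show "(\<Sum>q\<in>PP n. W p q * Bf q p') = (if p = p' then 1 else 0)" .
  qed
  show ?thesis
    unfolding linear_on_skew_def
  proof (intro ballI allI)
    fix x y :: "'a mat" and a b :: 'a assume x: "x \<in> skew_mats n" and y: "y \<in> skew_mats n"
    have xc: "x \<in> carrier_mat n n" and yc: "y \<in> carrier_mat n n" using x y by (auto simp: skew_mats_def)
    define u where "u = a \<cdot>\<^sub>m x + b \<cdot>\<^sub>m y"
    have uen: "u $$ (i,j) = a * x $$ (i,j) + b * y $$ (i,j)" if "i < n" "j < n" for i j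
      using that xc yc by (simp add: u_def)
    have u: "u \<in> skew_mats n"
      unfolding skew_mats_def
    proof (intro CollectI conjI)
      show uc: "u \<in> carrier_mat n n" using xc yc by (simp add: u_def)
      show "transpose_mat u = - u"
      proof (rule eq_matI)
        fix i j assume "i < dim_row (- u)" "j < dim_col (- u)"
        then have i: "i < n" and j: "j < n" using uc by auto
        show "transpose_mat u $$ (i, j) = (- u) $$ (i, j)"
          using i j uc uen[OF i j] uen[OF j i] skew_entry[OF x i j] skew_entry[OF y i j]
          by (simp add: algebra_simps)
      qed (use uc in auto)
    qed
    have pu: "\<psi> u \<in> skew_mats n" and px: "\<psi> x \<in> skew_mats n" and py: "\<psi> y \<in> skew_mats n"
      using assms(5) u x y by auto
    define c where "c q = \<psi> u $$ q - (a * \<psi> x $$ q + b * \<psi> y $$ q)" for q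
    have Wc: "\<forall>p\<in>PP n. (\<Sum>q\<in>PP n. W p q * c q) = 0"
    proof
      fix p assume p: "p \<in> PP n"
      then obtain i j where ij: "p = (i,j)" "i < j" "j < n" by (auto simp: PP_def)
      have "(\<Sum>q\<in>PP n. W p q * c q) = (\<Sum>q\<in>PP n. W p q * \<psi> u $$ q) - a * (\<Sum>q\<in>PP n. W p q * \<psi> x $$ q)
           - b * (\<Sum>q\<in>PP n. W p q * \<psi> y $$ q)"
        by (simp add: c_def sum_subtractf sum.distrib sum_distrib_left algebra_simps)
      also have "\<dots> = 2 * u $$ p - a * (2 * x $$ p) - b * (2 * y $$ p)"
        using C1[OF p u] C1[OF p x] C1[OF p y] by simp
      also have "\<dots> = 0" using uen[of i j] ij by (simp add: algebra_simps)
      finally show "(\<Sum>q\<in>PP n. W p q * c q) = 0" .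
    qed
    have c0: "\<forall>q\<in>PP n. c q = 0" by (rule key_inj[OF PP_finite AB Wc])
    have puc: "\<psi> u \<in> carrier_mat n n" and pxc: "\<psi> x \<in> carrier_mat n n" and pyc: "\<psi> y \<in> carrier_mat n n"
      using pu px py by (auto simp: skew_mats_def)
    show "\<psi> (a \<cdot>\<^sub>m x + b \<cdot>\<^sub>m y) = a \<cdot>\<^sub>m \<psi> x + b \<cdot>\<^sub>m \<psi> y"
      unfolding u_def[symmetric]
    proof (rule eq_matI)
      fix i j assume "i < dim_row (a \<cdot>\<^sub>m \<psi> x + b \<cdot>\<^sub>m \<psi> y)" "j < dim_col (a \<cdot>\<^sub>m \<psi> x + b \<cdot>\<^sub>m \<psi> y)"
      then have i: "i < n" and j: "j < n" using pxc pyc by auto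
      have R: "(a \<cdot>\<^sub>m \<psi> x + b \<cdot>\<^sub>m \<psi> y) $$ (k,l) = a * \<psi> x $$ (k,l) + b * \<psi> y $$ (k,l)"
        if "k < n" "l < n" for k l using that pxc pyc by simp
      consider "i < j" | "j < i" | "i = j" by linarith
      then show "\<psi> u $$ (i,j) = (a \<cdot>\<^sub>m \<psi> x + b \<cdot>\<^sub>m \<psi> y) $$ (i,j)"
      proof cases
        case 1
        then have "c (i,j) = 0" using c0 j by (auto simp: PP_def)
        then show ?thesis using R[OF i j] by (simp add: c_def)
      next
        case 2
        then have "c (j,i) = 0" using c0 i by (auto simp: PP_def)
        then have cu: "\<psi> u $$ (j,i) = a * \<psi> x $$ (j,i) + b * \<psi> y $$ (j,i)" by (simp add: c_def)
        have e1: "\<psi> u $$ (i,j) = - \<psi> u $$ (j,i)" by (rule skew_entry[OF pu j i])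
        have e2: "\<psi> x $$ (i,j) = - \<psi> x $$ (j,i)" by (rule skew_entry[OF px j i])
        have e3: "\<psi> y $$ (i,j) = - \<psi> y $$ (j,i)" by (rule skew_entry[OF py j i])
        show ?thesis unfolding R[OF i j] e1 e2 e3 cu by (simp add: algebra_simps)
      next
        case 3
        then show ?thesis using R[OF i j] skew_diag[OF pu i two] skew_diag[OF px i two] skew_diag[OF py i two]
          by simp
      qed
    qed (use puc pxc pyc in auto)
  qed
qed

end
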